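(* The relation of $\mathcal{C}$-$\mathrm{HH}$-symmetry is not transitive on the class of $\mathcal{C}$-$\mathrm{HH}$ graphs: there exist finite connected $\mathcal{C}$-$\mathrm{HH}$ graphs $G_1,G_2,G_3$ such that $G_1,G_2$ are $\mathcal{C}$-$\mathrm{HH}$-symmetric and $G_2,G_3$ are $\mathcal{C}$-$\mathrm{HH}$-symmetric, but $G_1,G_3$ are not $\mathcal{C}$-$\mathrm{HH}$-symmetric.
   Context: Graphs are simple; subgraphs are induced. A homomorphism maps edges to edges. A graph $G$ is $\mathcal{C}$-$\mathrm{HH}$ if every homomorphism from a finite connected induced subgraph of $G$ into $G$ extends to a homomorphism $G\to G$. For graphs $G_1,G_2$, $G_1$ is $\mathcal{C}$-$\mathrm{HH}$-morphic to $G_2$ if every homomorphism from a finite connected induced subgraph $A$ of $G_1$ onto an induced subgraph $B$ of $G_2$ extends to a homomorphism $G_1 \to G_2$; $G_1,G_2$ are $\mathcal{C}$-$\mathrm{HH}$-symmetric if each is $\mathcal{C}$-$\mathrm{HH}$-morphic to the other. *)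

theory Defs
  imports Main
begin

definition simple_graph :: "'a set \<Rightarrow> ('a \<Rightarrow> 'a \<Rightarrow> bool) \<Rightarrow> bool" where
  "simple_graph V E \<longleftrightarrow>
     (\<forall>x y. E x y \<longrightarrow> x \<in> V \<and> y \<in> V) \<and> (\<forall>x y. E x y \<longrightarrow> E y x) \<and> (\<forall>x. \<not> E x x)"

definition connected_on :: "('a \<Rightarrow> 'a \<Rightarrow> bool) \<Rightarrow> 'a set \<Rightarrow> bool" where
  "connected_on E A \<longleftrightarrow> A \<noteq> {} \<and>
     (\<forall>x\<in>A. \<forall>y\<in>A. (\<lambda>u v. E u v \<and> u \<in> A \<and> v \<in> A)\<^sup>*\<^sup>* x y)"

definition graph_hom :: "('a \<Rightarrow> 'a \<Rightarrow> bool) \<Rightarrow> 'a set \<Rightarrow> 'b set \<Rightarrow> ('b \<Rightarrow> 'b \<Rightarrow> bool)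
    \<Rightarrow> ('a \<Rightarrow> 'b) \<Rightarrow> bool" where
  "graph_hom E1 A V2 E2 f \<longleftrightarrow>
     (\<forall>x\<in>A. f x \<in> V2) \<and> (\<forall>x\<in>A. \<forall>y\<in>A. E1 x y \<longrightarrow> E2 (f x) (f y))"

definition CHH_morphic :: "'a set \<Rightarrow> ('a \<Rightarrow> 'a \<Rightarrow> bool) \<Rightarrow> 'b set \<Rightarrow> ('b \<Rightarrow> 'b \<Rightarrow> bool) \<Rightarrow> bool" where
  "CHH_morphic V1 E1 V2 E2 \<longleftrightarrow>
     (\<forall>A B f. A \<subseteq> V1 \<and> finite A \<and> connected_on E1 A \<and> B \<subseteq> V2 \<and>
        graph_hom E1 A B E2 f \<and> f ` A = B \<longrightarrow>
        (\<exists>g. graph_hom E1 V1 V2 E2 g \<and> (\<forall>x\<in>A. g x = f x)))"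

definition CHH :: "'a set \<Rightarrow> ('a \<Rightarrow> 'a \<Rightarrow> bool) \<Rightarrow> bool" where
  "CHH V E \<longleftrightarrow> CHH_morphic V E V E"

definition CHH_symmetric :: "'a set \<Rightarrow> ('a \<Rightarrow> 'a \<Rightarrow> bool) \<Rightarrow> 'b set \<Rightarrow> ('b \<Rightarrow> 'b \<Rightarrow> bool) \<Rightarrow> bool" where
  "CHH_symmetric V1 E1 V2 E2 \<longleftrightarrow> CHH_morphic V1 E1 V2 E2 \<and> CHH_morphic V2 E2 V1 E1"

end

theory Submission imports Defs begin
definition EP :: "nat \<Rightarrow> nat \<Rightarrow> nat \<Rightarrow> bool" where
  "EP n x y \<longleftrightarrow> x \<le> n \<and> y \<le> n \<and> (y = Suc x \<or> x = Suc y)"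

definition EC :: "nat \<Rightarrow> nat \<Rightarrow> bool" where
  "EC x y \<longleftrightarrow> x < 6 \<and> y < 6 \<and> (y = (x+1) mod 6 \<or> x = (y+1) mod 6)"

definition rtr :: "nat \<Rightarrow> nat \<Rightarrow> nat \<Rightarrow> nat" where
  "rtr i j x = (if x < i then (if even (i - x) then i else Suc i)
      else if j < x then (if even (x - j) then j else j - 1) else x)"

lemma rtr_suc: "i < j \<Longrightarrow> rtr i j (Suc x) = Suc (rtr i j x) \<or> rtr i j x = Suc (rtr i j (Suc x))"
proof -
  assume ij: "i < j"
  consider "Suc x < i" | "Suc x = i" | "i \<le> x \<and> Suc x \<le> j" | "x = j" | "j < x" by linarith
  then show ?thesis
  proof cases
    case 1
    then have "i - x = Suc (i - Suc x)" by simp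
    then show ?thesis using 1 unfolding rtr_def by auto
  next
    case 2 then show ?thesis using ij unfolding rtr_def by auto
  next
    case 3 then show ?thesis unfolding rtr_def by auto
  next
    case 4 then show ?thesis using ij unfolding rtr_def by auto
  next
    case 5
    then have "Suc x - j = Suc (x - j)" by simp
    then show ?thesis using 5 ij unfolding rtr_def by auto
  qed
qed

lemma rtr_range: "i < j \<Longrightarrow> i \<le> rtr i j x \<and> rtr i j x \<le> j"
  unfolding rtr_def by auto

lemma rtr_id: "i \<le> x \<Longrightarrow> x \<le> j \<Longrightarrow> rtr i j x = x"
  unfolding rtr_def by auto

lemma rtr_edge: "i < j \<Longrightarrow> j \<le> n \<Longrightarrow> EP n x y \<Longrightarrow> EP n (rtr i j x) (rtr i j y)"
  unfolding EP_def using rtr_suc[of i j x] rtr_suc[of i j y] rtr_range[of i j x] rtr_range[of i j y]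
  by auto

lemma EC_alt: "EC x y \<longleftrightarrow> x < 6 \<and> y < 6 \<and> (y = Suc x \<or> x = Suc y \<or> x = 0 \<and> y = 5 \<or> x = 5 \<and> y = 0)"
  unfolding EC_def by (auto simp: mod_Suc)

lemma six: "(x::nat) < 6 \<longleftrightarrow> x = 0 \<or> x = 1 \<or> x = 2 \<or> x = 3 \<or> x = 4 \<or> x = 5"
  by auto

lemma sig_inv: "(m::nat) \<le> 5 \<Longrightarrow> x < 6 \<Longrightarrow> ((x + (5 - m)) mod 6 + m + 1) mod 6 = x"
  using six[of x] six[of m] by auto

lemma sig_edge: "m \<le> 5 \<Longrightarrow> EC x y \<Longrightarrow> EC ((x + (5 - m)) mod 6) ((y + (5 - m)) mod 6)"
  unfolding EC_alt using six[of x] six[of m] by auto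

lemma tau_edge: "m \<le> 5 \<Longrightarrow> EC x y \<Longrightarrow> EC ((x + m + 1) mod 6) ((y + m + 1) mod 6)"
  unfolding EC_alt using six[of x] six[of m] by auto

lemma sig5: "(m::nat) \<le> 5 \<Longrightarrow> x < 6 \<Longrightarrow> ((x + (5 - m)) mod 6 = 5) = (x = m)"
  using six[of x] six[of m] by auto
lemma set6: "{0..5::nat} = {0,1,2,3,4,5}"
  by auto

lemma ex6: "(\<exists>w\<in>{0..5::nat}. P w) \<longleftrightarrow> P 0 \<or> P 1 \<or> P 2 \<or> P 3 \<or> P 4 \<or> P 5"
  unfolding set6 by simp

lemma nb: "EC a b \<Longrightarrow> b = (a+1) mod 6 \<or> b = (a+5) mod 6"
  unfolding EC_def using six[of b] by auto

lemma C6_Q: "EC a b \<Longrightarrow> EC b c \<Longrightarrow> EC c d \<Longrightarrow> EC d e \<Longrightarrow> \<exists>w\<in>{0..5}. EC w a \<and> EC w e"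
proof -
  assume h: "EC a b" "EC b c" "EC c d" "EC d e"
  have a6: "a < 6" using h(1) EC_def by auto
  obtain s1 s2 s3 s4 where s: "s1 \<in> {1,5::nat}" "s2 \<in> {1,5::nat}" "s3 \<in> {1,5::nat}" "s4 \<in> {1,5::nat}"
    "b = (a+s1) mod 6" "c = (b+s2) mod 6" "d = (c+s3) mod 6" "e = (d+s4) mod 6"
    using nb[OF h(1)] nb[OF h(2)] nb[OF h(3)] nb[OF h(4)] by (metis insertCI)
  have "e = (a + (s1+s2+s3+s4)) mod 6" using s(5-8) by (simp add: mod_add_left_eq add.assoc)
  also have "\<dots> = (a + (s1+s2+s3+s4) mod 6) mod 6" by (simp add: mod_add_right_eq)
  finally have e: "e = (a + (s1+s2+s3+s4) mod 6) mod 6" .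
  have "(s1+s2+s3+s4) mod 6 \<in> {0,2,4}" using s(1-4) by auto
  then consider "e = a mod 6" | "e = (a+2) mod 6" | "e = (a+4) mod 6" using e by auto
  then show ?thesis
  proof cases
    case 1 then show ?thesis using six[of a] a6 by (intro bexI[of _ "(a+1) mod 6"]) (auto simp: EC_def)
  next
    case 2 then show ?thesis using six[of a] a6 by (intro bexI[of _ "(a+1) mod 6"]) (auto simp: EC_def)
  next
    case 3 then show ?thesis using six[of a] a6 by (intro bexI[of _ "(a+5) mod 6"]) (auto simp: EC_def)
  qed
qed

lemma star_interval:
  assumes "(\<lambda>u v. EP n u v \<and> u \<in> A \<and> v \<in> A)\<^sup>*\<^sup>* a b" "a \<in> A"
  shows "\<forall>z. (a \<le> z \<and> z \<le> b \<or> b \<le> z \<and> z \<le> a) \<longrightarrow> z \<in> A"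
  using assms(1)
proof (induction rule: rtranclp_induct)
  case base
  then show ?case using assms(2) by auto
next
  case (step y y')
  show ?case
  proof (intro allI impI)
    fix z assume z: "a \<le> z \<and> z \<le> y' \<or> y' \<le> z \<and> z \<le> a"
    have "z = y' \<or> (a \<le> z \<and> z \<le> y \<or> y \<le> z \<and> z \<le> a)"
      using z step.hyps(2) unfolding EP_def by auto
    then show "z \<in> A" using step by auto
  qed
qed

lemma path_interval:
  assumes "connected_on (EP n) A" "a \<in> A" "b \<in> A" "a \<le> z" "z \<le> b"
  shows "z \<in> A"
  using assms star_interval[of n A a b] unfolding connected_on_def by blast

lemma path_ext:
  assumes A: "A \<subseteq> {0..n}" "connected_on (EP n) A"
    and f: "\<forall>x\<in>A. f x \<in> V2" "\<forall>x\<in>A. \<forall>y\<in>A. EP n x y \<longrightarrow> E2 (f x) (f y)"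
    and H: "\<forall>v\<in>V2. \<exists>w\<in>V2. E2 v w" "\<forall>x y. E2 x y \<longrightarrow> E2 y x"
  shows "\<exists>g. (\<forall>x. g x \<in> V2) \<and> (\<forall>x y. EP n x y \<longrightarrow> E2 (g x) (g y)) \<and> (\<forall>x\<in>A. g x = f x)"
proof -
  have fin: "finite A" using A(1) finite_subset by blast
  have ne: "A \<noteq> {}" using A(2) unfolding connected_on_def by auto
  define i where "i = Min A"
  define j where "j = Max A"
  have iA: "i \<in> A" and jA: "j \<in> A" using fin ne i_def j_def by auto
  have ij: "\<forall>x\<in>A. i \<le> x \<and> x \<le> j" using fin ne i_def j_def by auto
  have int: "\<And>z. i \<le> z \<Longrightarrow> z \<le> j \<Longrightarrow> z \<in> A" using path_interval[OF A(2) iA jA] by blast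
  have jn: "j \<le> n" using jA A(1) by auto
  show ?thesis
  proof (cases "i < j")
    case True
    define g where "g x = f (rtr i j x)" for x
    have r: "\<And>x. rtr i j x \<in> A" using rtr_range[OF True] int by blast
    show ?thesis
    proof (intro exI conjI allI impI ballI)
      fix x show "g x \<in> V2" using r f(1) g_def by auto
    next
      fix x y assume "EP n x y"
      then have "EP n (rtr i j x) (rtr i j y)" using rtr_edge[OF True jn] by blast
      then show "E2 (g x) (g y)" using f(2) r g_def by auto
    next
      fix x assume "x \<in> A" then show "g x = f x" using rtr_id ij g_def by auto
    qed
  next
    case False
    then have Ai: "A = {i}" using ij iA by force
    obtain w where w: "w \<in> V2" "E2 (f i) w" using H(1) f(1) iA by blast
    define g where "g x = (if even x = even i then f i else w)" for x :: nat
    show ?thesis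
    proof (intro exI conjI allI impI ballI)
      fix x show "g x \<in> V2" using w f(1) iA g_def by auto
    next
      fix x y assume "EP n x y"
      then have "even x \<noteq> even y" unfolding EP_def by auto
      then show "E2 (g x) (g y)" using w H(2) g_def by auto
    next
      fix x assume "x \<in> A" then show "g x = f x" using Ai g_def by auto
    qed
  qed
qed

lemma path_morphic:
  assumes H: "\<forall>v\<in>V2. \<exists>w\<in>V2. E2 v w" "\<forall>x y. E2 x y \<longrightarrow> E2 y x"
  shows "CHH_morphic {0..n} (EP n) V2 E2"
  unfolding CHH_morphic_def
proof (intro allI impI, elim conjE)
  fix A B f
  assume a: "A \<subseteq> {0..n}" "connected_on (EP n) A" "B \<subseteq> V2" "graph_hom (EP n) A B E2 f"
  then have f: "\<forall>x\<in>A. f x \<in> V2" "\<forall>x\<in>A. \<forall>y\<in>A. EP n x y \<longrightarrow> E2 (f x) (f y)"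
    unfolding graph_hom_def by auto
  obtain g where g: "\<forall>x. g x \<in> V2" "\<forall>x y. EP n x y \<longrightarrow> E2 (g x) (g y)" "\<forall>x\<in>A. g x = f x"
    using path_ext[OF a(1,2) f H] by blast
  show "\<exists>g. graph_hom (EP n) {0..n} V2 E2 g \<and> (\<forall>x\<in>A. g x = f x)"
    using g unfolding graph_hom_def by blast
qed

lemma conn_image:
  assumes "connected_on E A" "\<forall>x\<in>A. \<forall>y\<in>A. E x y \<longrightarrow> E' (h x) (h y)"
  shows "connected_on E' (h ` A)"
proof -
  have *: "(\<lambda>u v. E' u v \<and> u \<in> h`A \<and> v \<in> h`A)\<^sup>*\<^sup>* (h x) (h y)"
    if "(\<lambda>u v. E u v \<and> u \<in> A \<and> v \<in> A)\<^sup>*\<^sup>* x y" for x y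
    using that
  proof (induction rule: rtranclp_induct)
    case base then show ?case by simp
  next
    case (step y z)
    then show ?case using assms(2) by (simp add: rtranclp.rtrancl_into_rtrancl)
  qed
  show ?thesis using assms(1) * unfolding connected_on_def by auto
qed

lemma conn_path:
  assumes "\<forall>k<n. E k (Suc k) \<and> E (Suc k) k"
  shows "connected_on E {0..n}"
proof -
  let ?R = "\<lambda>u v. E u v \<and> u \<in> {0..n} \<and> v \<in> {0..n}"
  have "\<forall>a\<le>b. ?R\<^sup>*\<^sup>* a b \<and> ?R\<^sup>*\<^sup>* b a" if "b \<le> n" for b
    using that
  proof (induction b)
    case 0 then show ?case by auto
  next
    case (Suc b)
    have e: "?R b (Suc b)" "?R (Suc b) b" using Suc.prems assms by auto
    show ?case
    proof (intro allI impI)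
      fix a assume "a \<le> Suc b"
      then consider "a = Suc b" | "a \<le> b" by linarith
      then show "?R\<^sup>*\<^sup>* a (Suc b) \<and> ?R\<^sup>*\<^sup>* (Suc b) a"
      proof cases
        case 2
        then have ab: "?R\<^sup>*\<^sup>* a b" and ba: "?R\<^sup>*\<^sup>* b a" using Suc by auto
        have "?R\<^sup>*\<^sup>* a (Suc b)" by (rule rtranclp.rtrancl_into_rtrancl[OF ab e(1)])
        moreover have "?R\<^sup>*\<^sup>* (Suc b) a" by (rule converse_rtranclp_into_rtranclp[OF e(2) ba])
        ultimately show ?thesis by blast
      qed auto
    qed
  qed
  note main = this
  show ?thesis unfolding connected_on_def
  proof (intro conjI ballI)
    show "{0..n} \<noteq> {}" by auto
  next
    fix x y assume xy: "x \<in> {0..n}" "y \<in> {0..n}"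
    show "?R\<^sup>*\<^sup>* x y"
    proof (cases "x \<le> y")
      case True then show ?thesis using main[of y] xy by auto
    next
      case False then show ?thesis using main[of x] xy by auto
    qed
  qed
qed


lemma C6_morphic:
  assumes H: "\<forall>v\<in>V2. \<exists>w\<in>V2. E2 v w" "\<forall>x y. E2 x y \<longrightarrow> E2 y x"
    and Q: "\<forall>a b c d e. a \<in> V2 \<and> e \<in> V2 \<and> E2 a b \<and> E2 b c \<and> E2 c d \<and> E2 d e \<longrightarrow> (\<exists>w\<in>V2. E2 w a \<and> E2 w e)"
  shows "CHH_morphic {0..5} EC V2 E2"
  unfolding CHH_morphic_def
proof (intro allI impI, elim conjE)
  fix A B f
  assume a: "A \<subseteq> {0..5}" "connected_on EC A" "B \<subseteq> V2" "graph_hom EC A B E2 f"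
  then have fv: "\<forall>x\<in>A. f x \<in> V2" and fe: "\<forall>x\<in>A. \<forall>y\<in>A. EC x y \<longrightarrow> E2 (f x) (f y)"
    unfolding graph_hom_def by auto
  show "\<exists>g. graph_hom EC {0..5} V2 E2 g \<and> (\<forall>x\<in>A. g x = f x)"
  proof (cases "A = {0..5}")
    case True
    then show ?thesis using fv fe unfolding graph_hom_def EC_def
      by (intro exI[of _ f]) auto
  next
    case False
    have "\<not> {0..5} \<subseteq> A" using False a(1) by blast
    then obtain m where m0: "m \<in> {0..5}" "m \<notin> A" by blast
    then have m: "m \<le> 5" "m \<notin> A" by auto
    define \<sigma> where "\<sigma> x = (x + (5 - m)) mod 6" for x
    define \<tau> where "\<tau> y = (y + m + 1) mod 6" for y
    have A6: "\<And>x. x \<in> A \<Longrightarrow> x < 6" using a(1) by auto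
    have ts: "\<And>x. x \<in> A \<Longrightarrow> \<tau> (\<sigma> x) = x" using sig_inv[OF m(1)] A6 \<sigma>_def \<tau>_def by auto
    have s4: "\<And>x. x \<in> A \<Longrightarrow> \<sigma> x \<le> 4"
    proof -
      fix x assume x: "x \<in> A"
      have "\<sigma> x \<noteq> 5" using sig5[OF m(1) A6[OF x]] x m(2) \<sigma>_def by auto
      moreover have "\<sigma> x < 6" using \<sigma>_def by auto
      ultimately show "\<sigma> x \<le> 4" by linarith
    qed
    define A' where "A' = \<sigma> ` A"
    have A'sub: "A' \<subseteq> {0..4}" using s4 A'_def by auto
    have conn: "connected_on (EP 4) A'"
      unfolding A'_def
    proof (rule conn_image[OF a(2)], intro ballI impI)
      fix x y assume xy: "x \<in> A" "y \<in> A" "EC x y"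
      have "EC (\<sigma> x) (\<sigma> y)" using sig_edge[OF m(1) xy(3)] \<sigma>_def by simp
      then show "EP 4 (\<sigma> x) (\<sigma> y)" using s4[OF xy(1)] s4[OF xy(2)] unfolding EC_alt EP_def by auto
    qed
    define f' where "f' x = f (\<tau> x)" for x
    have f'v: "\<forall>x\<in>A'. f' x \<in> V2" using fv ts f'_def A'_def by auto
    have f'e: "\<forall>x\<in>A'. \<forall>y\<in>A'. EP 4 x y \<longrightarrow> E2 (f' x) (f' y)"
    proof (intro ballI impI)
      fix x' y' assume xy: "x' \<in> A'" "y' \<in> A'" "EP 4 x' y'"
      obtain x y where xy2: "x \<in> A" "y \<in> A" "x' = \<sigma> x" "y' = \<sigma> y" using xy(1,2) A'_def by auto
      have "EC x' y'" using xy(3) unfolding EP_def EC_alt by auto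
      then have "EC (\<tau> x') (\<tau> y')" using tau_edge[OF m(1)] \<tau>_def by simp
      then have "EC x y" using ts xy2 by simp
      then show "E2 (f' x') (f' y')" using fe xy2 ts f'_def by simp
    qed
    obtain g' where g': "\<forall>x. g' x \<in> V2" "\<forall>x y. EP 4 x y \<longrightarrow> E2 (g' x) (g' y)" "\<forall>x\<in>A'. g' x = f' x"
      using path_ext[OF A'sub conn f'v f'e H] by blast
    have "E2 (g' 0) (g' 1)" "E2 (g' 1) (g' 2)" "E2 (g' 2) (g' 3)" "E2 (g' 3) (g' 4)"
      using g'(2) unfolding EP_def by auto
    then obtain c where c: "c \<in> V2" "E2 c (g' 0)" "E2 c (g' 4)" using Q g'(1) by blast
    define g'' where "g'' x = (if x = 5 then c else g' x)" for x
    have g''e: "E2 (g'' u) (g'' v)" if uv: "EC u v" for u v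
    proof -
      consider "u \<le> 4 \<and> v \<le> 4 \<and> (v = Suc u \<or> u = Suc v)" | "u = 5 \<and> (v = 4 \<or> v = 0)" | "v = 5 \<and> (u = 4 \<or> u = 0)"
        using uv unfolding EC_alt by fastforce
      then show ?thesis
      proof cases
        case 1 then show ?thesis using g'(2) g''_def unfolding EP_def by auto
      next
        case 2 then show ?thesis using c g''_def by auto
      next
        case 3 then show ?thesis using c g''_def H(2) by auto
      qed
    qed
    show ?thesis
    proof (intro exI[of _ "\<lambda>x. g'' (\<sigma> x)"] conjI ballI)
      show "graph_hom EC {0..5} V2 E2 (\<lambda>x. g'' (\<sigma> x))"
        unfolding graph_hom_def
      proof (intro conjI ballI impI)
        fix x show "g'' (\<sigma> x) \<in> V2" using g'(1) c(1) g''_def by auto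
      next
        fix x y assume "EC x y"
        then have "EC (\<sigma> x) (\<sigma> y)" using sig_edge[OF m(1)] \<sigma>_def by simp
        then show "E2 (g'' (\<sigma> x)) (g'' (\<sigma> y))" using g''e by blast
      qed
    next
      fix x assume x: "x \<in> A"
      have "\<sigma> x \<noteq> 5" using s4[OF x] by auto
      then show "g'' (\<sigma> x) = f x" using g'(3) x A'_def g''_def f'_def ts by auto
    qed
  qed
qed

lemma EC_simple: "simple_graph {0..5} EC"
  unfolding simple_graph_def EC_alt by auto

lemma EP_simple: "simple_graph {0..n} (EP n)"
  unfolding simple_graph_def EP_def by auto

lemma EC_conn: "connected_on EC {0..5}"
  by (rule conn_path) (auto simp: EC_alt)

lemma EP_conn: "connected_on (EP n) {0..n}"
  by (rule conn_path) (auto simp: EP_def)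

lemma EC_noiso: "\<forall>v\<in>{0..5}. \<exists>w\<in>{0..5}. EC v w"
proof
  fix v :: nat assume v: "v \<in> {0..5}"
  show "\<exists>w\<in>{0..5}. EC v w"
  proof (cases "v < 5")
    case True then show ?thesis by (intro bexI[of _ "Suc v"]) (auto simp: EC_alt)
  next
    case False then show ?thesis using v by (intro bexI[of _ 0]) (auto simp: EC_alt)
  qed
qed

lemma EP_noiso: "n \<ge> 1 \<Longrightarrow> \<forall>v\<in>{0..n}. \<exists>w\<in>{0..n}. EP n v w"
proof
  fix v :: nat assume n: "n \<ge> 1" and v: "v \<in> {0..n}"
  show "\<exists>w\<in>{0..n}. EP n v w"
  proof (cases "v < n")
    case True then show ?thesis by (intro bexI[of _ "Suc v"]) (auto simp: EP_def)
  next
    case False then show ?thesis using v n by (intro bexI[of _ "v - 1"]) (auto simp: EP_def)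
  qed
qed

lemma EC_sym: "\<forall>x y. EC x y \<longrightarrow> EC y x"
  unfolding EC_def by auto
lemma EP_sym: "\<forall>x y. EP n x y \<longrightarrow> EP n y x"
  unfolding EP_def by auto

lemma EC_Q: "\<forall>a b c d e. a \<in> {0..5} \<and> e \<in> {0..5} \<and> EC a b \<and> EC b c \<and> EC c d \<and> EC d e \<longrightarrow> (\<exists>w\<in>{0..5}. EC w a \<and> EC w e)"
  using C6_Q by blast

lemma K2_Q: "\<forall>a b c d e. a \<in> {0..1} \<and> e \<in> {0..1} \<and> EP 1 a b \<and> EP 1 b c \<and> EP 1 c d \<and> EP 1 d e \<longrightarrow> (\<exists>w\<in>{0..1}. EP 1 w a \<and> EP 1 w e)"
proof (intro allI impI)
  fix a b c d e :: nat
  assume h: "a \<in> {0..1} \<and> e \<in> {0..1} \<and> EP 1 a b \<and> EP 1 b c \<and> EP 1 c d \<and> EP 1 d e"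
  then show "\<exists>w\<in>{0..1}. EP 1 w a \<and> EP 1 w e"
    by (intro bexI[of _ b]) (auto simp: EP_def)
qed

lemma not_C6_P5: "\<not> CHH_morphic {0..5} EC {0..4} (EP 4)"
proof
  assume M: "CHH_morphic {0..5} EC {0..4} (EP 4)"
  have conn: "connected_on EC {0..4}" by (rule conn_path) (auto simp: EC_alt)
  have hom: "graph_hom EC {0..4} {0..4} (EP 4) id"
    unfolding graph_hom_def EC_alt EP_def by auto
  have sub: "{0..4::nat} \<subseteq> {0..5}" by auto
  have "\<exists>g. graph_hom EC {0..5} {0..4} (EP 4) g \<and> (\<forall>x\<in>{0..4}. g x = id x)"
    using M[unfolded CHH_morphic_def, rule_format, of "{0..4}" "{0..4}" id] conn hom sub by simp
  then obtain g where g: "graph_hom EC {0..5} {0..4} (EP 4) g" "\<forall>x\<in>{0..4}. g x = id x"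
    by blast
  have "EC 5 0" "EC 5 4" by (auto simp: EC_alt)
  then have "EP 4 (g 5) (g 0)" "EP 4 (g 5) (g 4)" using g(1) unfolding graph_hom_def by auto
  moreover have "g 0 = 0" "g 4 = 4" using g(2) by auto
  ultimately show False unfolding EP_def by auto
qed

lemma K2_noiso: "\<forall>v\<in>{0..1}. \<exists>w\<in>{0..1}. EP 1 v w"
  using EP_noiso[of 1] by simp
lemma P5_noiso: "\<forall>v\<in>{0..4}. \<exists>w\<in>{0..4}. EP 4 v w"
  using EP_noiso[of 4] by simp

theorem lemma3p3:
  shows "\<exists>(V1::nat set) E1 (V2::nat set) E2 (V3::nat set) E3.
    simple_graph V1 E1 \<and> finite V1 \<and> connected_on E1 V1 \<and> CHH V1 E1 \<and>
    simple_graph V2 E2 \<and> finite V2 \<and> connected_on E2 V2 \<and> CHH V2 E2 \<and>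
    simple_graph V3 E3 \<and> finite V3 \<and> connected_on E3 V3 \<and> CHH V3 E3 \<and>
    CHH_symmetric V1 E1 V2 E2 \<and> CHH_symmetric V2 E2 V3 E3 \<and>
    \<not> CHH_symmetric V1 E1 V3 E3"
proof (intro exI conjI)
  show "simple_graph {0..5} EC" by (rule EC_simple)
  show "finite {0..5::nat}" by simp
  show "connected_on EC {0..5}" by (rule EC_conn)
  show "CHH {0..5} EC" unfolding CHH_def by (rule C6_morphic[OF EC_noiso EC_sym EC_Q])
  show "simple_graph {0..1} (EP 1)" by (rule EP_simple)
  show "finite {0..1::nat}" by simp
  show "connected_on (EP 1) {0..1}" by (rule EP_conn)
  show "CHH {0..1} (EP 1)" unfolding CHH_def by (rule path_morphic[OF K2_noiso EP_sym])
  show "simple_graph {0..4} (EP 4)" by (rule EP_simple)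
  show "finite {0..4::nat}" by simp
  show "connected_on (EP 4) {0..4}" by (rule EP_conn)
  show "CHH {0..4} (EP 4)" unfolding CHH_def by (rule path_morphic[OF P5_noiso EP_sym])
  show "CHH_symmetric {0..5} EC {0..1} (EP 1)" unfolding CHH_symmetric_def
    using C6_morphic[OF K2_noiso EP_sym K2_Q] path_morphic[OF EC_noiso EC_sym] by blast
  show "CHH_symmetric {0..1} (EP 1) {0..4} (EP 4)" unfolding CHH_symmetric_def
    using path_morphic[OF P5_noiso EP_sym] path_morphic[OF K2_noiso EP_sym] by blast
  show "\<not> CHH_symmetric {0..5} EC {0..4} (EP 4)" unfolding CHH_symmetric_def using not_C6_P5 by simp
qed
end
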